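(* For every $k\geq 0$, \[H_{k+1}(x)=G_k(x)\,(x+x^2+\cdots+x^{2k+4}).\]
   Context: $B_n(y)=\sum_{\pi\in B_n}y^{\mathrm{des}_B(\pi)}$ is the type $B$ Eulerian polynomial: $B_n$ is the set of signed permutations $\pi_1\cdots\pi_n$ of $[n]$, and with $\pi_0=0$, $\mathrm{des}_B(\pi)$ counts $i\in\{0,\dots,n-1\}$ with $\pi_i>\pi_{i+1}$; $B_0=1$. For $k\ge0$ define \[H_k(x)=\sum_{l=0}^{k}B_{k-l}(x^{2k+2})(x^{2k+2}-1)^l\sum_{s=l}^{k}\binom{s}{l}x^{2k+1-s}+\sum_{l=0}^{k}B_{k-l}(x^{-2k-2})(x^{-2k-2}-1)^l\sum_{s=l}^{k}\binom{s}{l}x^{2(k+1)^2+s}\] and \[G_k(x)=\frac{1}{x}\sum_{l=0}^{k}B_{k-l}(x^{2k+4})(x^{2k+4}-1)^l\sum_{s=l}^{k}\binom{s}{l}x^{2k+3-s}+\sum_{l=0}^{k}B_{k-l}(x^{-2k-4})(x^{-2k-4}-1)^l\sum_{s=l}^{k}\binom{s}{l}x^{2(k+1)(k+2)+s}.\] *)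

theory Defs
  imports Complex_Main
begin

text \<open>Signed permutations of [n], represented as functions pi :: nat => int with
  pi 0 = 0 (the convention pi_0 = 0), pi i = 0 outside {0..n}, and
  i |-> |pi i| a bijection of {1..n}.\<close>
definition signed_perms :: "nat \<Rightarrow> (nat \<Rightarrow> int) set" where
  "signed_perms n = {\<pi>. (\<forall>i. (i = 0 \<or> n < i) \<longrightarrow> \<pi> i = 0) \<and>
                         bij_betw (\<lambda>i. nat \<bar>\<pi> i\<bar>) {1..n} {1..n}}"

definition desB :: "nat \<Rightarrow> (nat \<Rightarrow> int) \<Rightarrow> nat" where
  "desB n \<pi> = card {i \<in> {0..<n}. \<pi> i > \<pi> (Suc i)}"

definition eulerB :: "nat \<Rightarrow> real \<Rightarrow> real" where
  "eulerB n y = (\<Sum>\<pi>\<in>signed_perms n. y ^ desB n \<pi>)"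

definition Hk :: "nat \<Rightarrow> real \<Rightarrow> real" where
  "Hk k x =
     (\<Sum>l=0..k. eulerB (k - l) (x ^ (2*k+2)) * (x ^ (2*k+2) - 1) ^ l *
        (\<Sum>s=l..k. of_nat (s choose l) * x ^ (2*k+1-s)))
   + (\<Sum>l=0..k. eulerB (k - l) (inverse (x ^ (2*k+2))) * (inverse (x ^ (2*k+2)) - 1) ^ l *
        (\<Sum>s=l..k. of_nat (s choose l) * x ^ (2*(k+1)^2 + s)))"

definition Gk :: "nat \<Rightarrow> real \<Rightarrow> real" where
  "Gk k x =
     (1 / x) * (\<Sum>l=0..k. eulerB (k - l) (x ^ (2*k+4)) * (x ^ (2*k+4) - 1) ^ l *
        (\<Sum>s=l..k. of_nat (s choose l) * x ^ (2*k+3-s)))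
   + (\<Sum>l=0..k. eulerB (k - l) (inverse (x ^ (2*k+4))) * (inverse (x ^ (2*k+4)) - 1) ^ l *
        (\<Sum>s=l..k. of_nat (s choose l) * x ^ (2*(k+1)*(k+2) + s)))"

end

theory Submission
  imports Defs "HOL-Computational_Algebra.Polynomial_FPS"
begin

abbreviation SP where "SP \<equiv> signed_perms"

lemma SP_zero: "\<pi> \<in> SP n \<Longrightarrow> \<pi> 0 = 0"
  by (simp add: signed_perms_def)

lemma SP_big: "\<pi> \<in> SP n \<Longrightarrow> n < i \<Longrightarrow> \<pi> i = 0"
  by (simp add: signed_perms_def)

lemma SP_bij: "\<pi> \<in> SP n \<Longrightarrow> bij_betw (\<lambda>i. nat \<bar>\<pi> i\<bar>) {1..n} {1..n}"
  by (simp add: signed_perms_def)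

lemma SP_range: "\<pi> \<in> SP n \<Longrightarrow> i \<in> {1..n} \<Longrightarrow> nat \<bar>\<pi> i\<bar> \<in> {1..n}"
  using bij_betw_apply[OF SP_bij] by blast

lemma SP_inj: "\<pi> \<in> SP n \<Longrightarrow> i \<in> {1..n} \<Longrightarrow> j \<in> {1..n} \<Longrightarrow> \<bar>\<pi> i\<bar> = \<bar>\<pi> j\<bar> \<Longrightarrow> i = j"
  using inj_onD[OF bij_betw_imp_inj_on[OF SP_bij]] by metis

lemma SP_abs_le: "\<pi> \<in> SP n \<Longrightarrow> \<bar>\<pi> i\<bar> \<le> int n"
proof -
  assume a: "\<pi> \<in> SP n"
  show ?thesis
  proof (cases "i \<in> {1..n}")
    case True then have "nat \<bar>\<pi> i\<bar> \<in> {1..n}" by (rule SP_range[OF a])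
    then show ?thesis by auto
  next
    case False then have "i = 0 \<or> n < i" by auto
    then show ?thesis using SP_zero[OF a] SP_big[OF a] by auto
  qed
qed

lemma SP_intro:
  assumes "\<pi> 0 = 0" "\<And>i. n < i \<Longrightarrow> \<pi> i = 0"
    and R: "\<And>i. i \<in> {1..n} \<Longrightarrow> nat \<bar>\<pi> i\<bar> \<in> {1..n}"
    and I: "\<And>i j. i \<in> {1..n} \<Longrightarrow> j \<in> {1..n} \<Longrightarrow> \<bar>\<pi> i\<bar> = \<bar>\<pi> j\<bar> \<Longrightarrow> i = j"
  shows "\<pi> \<in> SP n"
proof -
  have inj: "inj_on (\<lambda>i. nat \<bar>\<pi> i\<bar>) {1..n}"
  proof (rule inj_onI)
    fix i j assume "i \<in> {1..n}" "j \<in> {1..n}" "nat \<bar>\<pi> i\<bar> = nat \<bar>\<pi> j\<bar>"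
    then show "i = j" using I[of i j] by (simp add: eq_nat_nat_iff)
  qed
  have "(\<lambda>i. nat \<bar>\<pi> i\<bar>) ` {1..n} = {1..n}"
  proof (rule endo_inj_surj)
    show "finite {1..n}" by simp
    show "(\<lambda>i. nat \<bar>\<pi> i\<bar>) ` {1..n} \<subseteq> {1..n}" using R by (simp add: image_subset_iff)
    show "inj_on (\<lambda>i. nat \<bar>\<pi> i\<bar>) {1..n}" by (rule inj)
  qed
  then have "bij_betw (\<lambda>i. nat \<bar>\<pi> i\<bar>) {1..n} {1..n}" using inj by (simp add: bij_betw_def)
  then show ?thesis using assms(1,2) unfolding signed_perms_def mem_Collect_eq by auto
qed

definition ins :: "nat \<Rightarrow> (nat \<Rightarrow> int) \<Rightarrow> nat \<Rightarrow> int \<Rightarrow> (nat \<Rightarrow> int)" where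
  "ins n \<sigma> p e = (\<lambda>i. if i \<le> p then \<sigma> i else if i = Suc p then e * int (Suc n) else \<sigma> (i - 1))"

lemma ins_SP:
  assumes s: "\<sigma> \<in> SP n" and p: "p \<le> n" and e: "e \<in> {1,-1}"
  shows "ins n \<sigma> p e \<in> SP (Suc n)"
proof (rule SP_intro)
  show "ins n \<sigma> p e 0 = 0" using SP_zero[OF s] by (simp add: ins_def)
  show "ins n \<sigma> p e i = 0" if "Suc n < i" for i
    using that p SP_big[OF s, of "i-1"] by (simp add: ins_def)
  have ae: "\<bar>e * int (Suc n)\<bar> = int (Suc n)" using e by auto
  have A: "\<And>i. \<bar>ins n \<sigma> p e i\<bar> = (if i = Suc p then int (Suc n) else \<bar>\<sigma> (if i \<le> p then i else i - 1)\<bar>)"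
    using ae by (simp add: ins_def)
  show "nat \<bar>ins n \<sigma> p e i\<bar> \<in> {1..Suc n}" if i: "i \<in> {1..Suc n}" for i
  proof (cases "i = Suc p")
    case True then show ?thesis using A[of i] by (simp add: nat_add_distrib)
  next
    case False
    then have "(if i \<le> p then i else i - 1) \<in> {1..n}" using i p by auto
    from SP_range[OF s this] show ?thesis using A[of i] False by simp
  qed
  show "i = j" if i: "i \<in> {1..Suc n}" and j: "j \<in> {1..Suc n}"
     and eq: "\<bar>ins n \<sigma> p e i\<bar> = \<bar>ins n \<sigma> p e j\<bar>" for i j
  proof -
    have ri: "i \<noteq> Suc p \<Longrightarrow> (if i \<le> p then i else i - 1) \<in> {1..n}" using i p by auto
    have rj: "j \<noteq> Suc p \<Longrightarrow> (if j \<le> p then j else j - 1) \<in> {1..n}" using j p by auto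
    show ?thesis
    proof (cases "i = Suc p"; cases "j = Suc p")
      assume "i = Suc p" "j = Suc p" then show ?thesis by simp
    next
      assume "i = Suc p" "j \<noteq> Suc p"
      then show ?thesis using eq A[of i] A[of j] SP_abs_le[OF s, of "(if j \<le> p then j else j - 1)"] by simp
    next
      assume "i \<noteq> Suc p" "j = Suc p"
      then show ?thesis using eq A[of i] A[of j] SP_abs_le[OF s, of "(if i \<le> p then i else i - 1)"] by simp
    next
      assume ii: "i \<noteq> Suc p" "j \<noteq> Suc p"
      have "\<bar>\<sigma> (if i \<le> p then i else i - 1)\<bar> = \<bar>\<sigma> (if j \<le> p then j else j - 1)\<bar>"
        using eq A[of i] A[of j] ii by simp
      from SP_inj[OF s ri[OF ii(1)] rj[OF ii(2)] this]
      show ?thesis using ii i j by (simp split: if_splits)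
    qed
  qed
qed

definition del :: "nat \<Rightarrow> (nat \<Rightarrow> int) \<Rightarrow> (nat \<Rightarrow> int)" where
  "del p \<pi> = (\<lambda>i. if i \<le> p then \<pi> i else \<pi> (Suc i))"

lemma del_ins: "del p (ins n \<sigma> p e) = \<sigma>"
  by (rule ext) (simp add: del_def ins_def)

lemma ins_at: "ins n \<sigma> p e (Suc p) = e * int (Suc n)"
  by (simp add: ins_def)

lemma ins_inj:
  assumes s: "\<sigma> \<in> SP n" and p: "p \<le> n" and e: "e \<in> {1,-1}"
    and s': "\<sigma>' \<in> SP n" and p': "p' \<le> n" and e': "e' \<in> {1,-1}"
    and eq: "ins n \<sigma> p e = ins n \<sigma>' p' e'"
  shows "\<sigma> = \<sigma>' \<and> p = p' \<and> e = e'"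
proof -
  have pp: "p = p'"
  proof (rule ccontr)
    assume ne: "p \<noteq> p'"
    have "\<bar>ins n \<sigma>' p' e' (Suc p)\<bar> \<le> int n"
    proof (cases "Suc p \<le> p'")
      case True then show ?thesis using SP_abs_le[OF s'] by (simp add: ins_def)
    next
      case False then show ?thesis using SP_abs_le[OF s'] ne by (simp add: ins_def)
    qed
    moreover have "\<bar>ins n \<sigma> p e (Suc p)\<bar> = int (Suc n)" using e by (auto simp: ins_at)
    ultimately show False using eq by simp
  qed
  have ee: "e = e'" using arg_cong[OF eq, of "\<lambda>f. f (Suc p)"] pp by (simp add: ins_at)
  have "\<sigma> = \<sigma>'" using arg_cong[OF eq, of "del p"] pp by (simp add: del_ins)
  then show ?thesis using pp ee by simp
qed

lemma ins_surj:
  assumes pi: "\<pi> \<in> SP (Suc n)"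
  shows "\<exists>\<sigma> p e. \<sigma> \<in> SP n \<and> p \<le> n \<and> e \<in> {1,-1} \<and> \<pi> = ins n \<sigma> p e"
proof -
  have "Suc n \<in> (\<lambda>i. nat \<bar>\<pi> i\<bar>) ` {1..Suc n}" using SP_bij[OF pi] by (simp add: bij_betw_def)
  then obtain j where j: "j \<in> {1..Suc n}" and pj: "nat \<bar>\<pi> j\<bar> = Suc n" by auto
  define p where "p = j - 1"
  have jp: "j = Suc p" using j by (simp add: p_def)
  have pn: "p \<le> n" using j by (simp add: p_def) linarith
  define e :: int where "e = (if \<pi> j > 0 then 1 else -1)"
  have e: "e \<in> {1,-1}" by (simp add: e_def)
  have pje: "\<pi> j = e * int (Suc n)" using pj by (simp add: e_def) linarith
  define \<sigma> where "\<sigma> = del p \<pi>"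
  have ins_eq: "\<pi> = ins n \<sigma> p e"
  proof (rule ext)
    fix i show "\<pi> i = ins n \<sigma> p e i"
      using pje jp by (auto simp: ins_def \<sigma>_def del_def)
  qed
  have sig: "\<sigma> \<in> SP n"
  proof (rule SP_intro)
    show "\<sigma> 0 = 0" using SP_zero[OF pi] by (simp add: \<sigma>_def del_def)
    show "\<sigma> i = 0" if "n < i" for i using that pn SP_big[OF pi, of "Suc i"] by (simp add: \<sigma>_def del_def)
    have idx: "\<And>i. i \<in> {1..n} \<Longrightarrow> (if i \<le> p then i else Suc i) \<in> {1..Suc n} \<and> (if i \<le> p then i else Suc i) \<noteq> j"
      using jp pn by auto
    have sv: "\<And>i. \<sigma> i = \<pi> (if i \<le> p then i else Suc i)" by (simp add: \<sigma>_def del_def)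
    show "nat \<bar>\<sigma> i\<bar> \<in> {1..n}" if i: "i \<in> {1..n}" for i
    proof -
      let ?i = "(if i \<le> p then i else Suc i)"
      have a: "nat \<bar>\<pi> ?i\<bar> \<in> {1..Suc n}" using SP_range[OF pi] idx[OF i] by blast
      have "nat \<bar>\<pi> ?i\<bar> \<noteq> Suc n"
      proof
        assume "nat \<bar>\<pi> ?i\<bar> = Suc n"
        then have "\<bar>\<pi> ?i\<bar> = \<bar>\<pi> j\<bar>" using pj by simp
        from SP_inj[OF pi _ j this] idx[OF i] show False by blast
      qed
      then show ?thesis using a sv[of i] by auto
    qed
    show "i = i'" if i: "i \<in> {1..n}" and i': "i' \<in> {1..n}" and eq: "\<bar>\<sigma> i\<bar> = \<bar>\<sigma> i'\<bar>" for i i'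
    proof -
      have "(if i \<le> p then i else Suc i) = (if i' \<le> p then i' else Suc i')"
        using SP_inj[OF pi conjunct1[OF idx[OF i]] conjunct1[OF idx[OF i']]] eq sv by metis
      then show ?thesis by (simp split: if_splits)
    qed
  qed
  show ?thesis using sig pn e ins_eq by blast
qed

lemma ins_bij: "bij_betw (\<lambda>(\<sigma>, p, e). ins n \<sigma> p e) (SP n \<times> {..n} \<times> {1,-1}) (SP (Suc n))"
proof -
  have "inj_on (\<lambda>(\<sigma>, p, e). ins n \<sigma> p e) (SP n \<times> {..n} \<times> {1,-1})"
  proof (rule inj_onI)
    fix a b assume a: "a \<in> SP n \<times> {..n} \<times> {1,-1::int}" and b: "b \<in> SP n \<times> {..n} \<times> {1,-1::int}"
      and eq: "(\<lambda>(\<sigma>, p, e). ins n \<sigma> p e) a = (\<lambda>(\<sigma>, p, e). ins n \<sigma> p e) b"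
    obtain \<sigma> p e where ad: "a = (\<sigma>, p, e)" using prod_cases3 by blast
    obtain \<sigma>' p' e' where bd: "b = (\<sigma>', p', e')" using prod_cases3 by blast
    have "\<sigma> = \<sigma>' \<and> p = p' \<and> e = e'"
      by (rule ins_inj[of \<sigma> n p e \<sigma>' p' e']) (use a b eq ad bd in auto)
    then show "a = b" using ad bd by simp
  qed
  moreover have "(\<lambda>(\<sigma>, p, e). ins n \<sigma> p e) ` (SP n \<times> {..n} \<times> {1,-1}) = SP (Suc n)"
  proof
    show "(\<lambda>(\<sigma>, p, e). ins n \<sigma> p e) ` (SP n \<times> {..n} \<times> {1,-1}) \<subseteq> SP (Suc n)"
      using ins_SP by auto
    show "SP (Suc n) \<subseteq> (\<lambda>(\<sigma>, p, e). ins n \<sigma> p e) ` (SP n \<times> {..n} \<times> {1,-1})"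
    proof
      fix \<pi> assume "\<pi> \<in> SP (Suc n)"
      from ins_surj[OF this] obtain \<sigma> p e where "\<sigma> \<in> SP n" "p \<le> n" "e \<in> {1,-1}" "\<pi> = ins n \<sigma> p e" by blast
      then show "\<pi> \<in> (\<lambda>(\<sigma>, p, e). ins n \<sigma> p e) ` (SP n \<times> {..n} \<times> {1,-1})"
        by (intro image_eqI[of _ _ "(\<sigma>, p, e)"]) auto
    qed
  qed
  ultimately show ?thesis by (simp add: bij_betw_def)
qed

definition tdes :: "(nat \<Rightarrow> int) \<Rightarrow> nat \<Rightarrow> nat" where
  "tdes \<pi> i = (if \<pi> (Suc i) < \<pi> i then 1 else 0)"

definition dsum :: "nat \<Rightarrow> (nat \<Rightarrow> int) \<Rightarrow> nat" where
  "dsum n \<pi> = (\<Sum>i\<in>{0..<n}. tdes \<pi> i)"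

lemma desB_dsum: "desB n \<pi> = dsum n \<pi>"
proof -
  have "desB n \<pi> = (\<Sum>i\<in>{i \<in> {0..<n}. \<pi> (Suc i) < \<pi> i}. 1)"
    unfolding desB_def by simp
  also have "\<dots> = (\<Sum>i\<in>{0..<n}. if \<pi> (Suc i) < \<pi> i then 1 else 0)"
    by (rule sum.inter_filter) simp
  finally show ?thesis by (simp add: dsum_def tdes_def)
qed

lemma dsum_le: "dsum n \<pi> \<le> n"
proof -
  have "dsum n \<pi> \<le> (\<Sum>i\<in>{0..<n}. 1)" unfolding dsum_def
    by (rule sum_mono) (simp add: tdes_def)
  then show ?thesis by simp
qed

lemma tdes_le: "tdes \<pi> i \<le> 1" by (simp add: tdes_def)

lemma dsum_split:
  assumes "p \<le> m"
  shows "dsum m \<pi> = (\<Sum>i\<in>{0..<p}. tdes \<pi> i) + (\<Sum>i\<in>{p..<m}. tdes \<pi> i)"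
  unfolding dsum_def using sum.atLeastLessThan_concat[of 0 p m "tdes \<pi>"] assms by simp

lemma des_ins:
  assumes s: "\<sigma> \<in> SP n" and p: "p \<le> n" and e: "e \<in> {1,-1}"
  shows "dsum (Suc n) (ins n \<sigma> p e) =
    (if p < n then dsum n \<sigma> + 1 - tdes \<sigma> p else dsum n \<sigma> + (if e = -1 then 1 else 0))"
proof -
  let ?\<pi> = "ins n \<sigma> p e"
  have A: "(\<Sum>i\<in>{0..<p}. tdes ?\<pi> i) = (\<Sum>i\<in>{0..<p}. tdes \<sigma> i)"
    by (rule sum.cong) (auto simp: tdes_def ins_def)
  have absp: "\<bar>\<sigma> p\<bar> \<le> int n" by (rule SP_abs_le[OF s])
  have tp: "tdes ?\<pi> p = (if e = -1 then 1 else 0)"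
    using e absp by (auto simp: tdes_def ins_def)
  have S1: "(\<Sum>i\<in>{p..<Suc n}. tdes ?\<pi> i) = tdes ?\<pi> p + (\<Sum>i\<in>{p..<n}. tdes ?\<pi> (Suc i))"
  proof -
    have "(\<Sum>i\<in>{p..<Suc n}. tdes ?\<pi> i) = tdes ?\<pi> p + (\<Sum>i\<in>{Suc p..<Suc n}. tdes ?\<pi> i)"
      by (rule sum.atLeast_Suc_lessThan) (use p in simp)
    also have "\<dots> = tdes ?\<pi> p + sum (tdes ?\<pi> \<circ> Suc) {p..<n}"
      by (simp only: sum.atLeast_Suc_lessThan_Suc_shift)
    finally show ?thesis by (simp add: comp_def)
  qed
  have D1: "dsum (Suc n) ?\<pi> = (\<Sum>i\<in>{0..<p}. tdes \<sigma> i) + (if e = -1 then 1 else 0) + (\<Sum>i\<in>{p..<n}. tdes ?\<pi> (Suc i))"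
    using dsum_split[of p "Suc n" ?\<pi>] p A tp S1 by simp
  have D2: "dsum n \<sigma> = (\<Sum>i\<in>{0..<p}. tdes \<sigma> i) + (\<Sum>i\<in>{p..<n}. tdes \<sigma> i)"
    using dsum_split[of p n \<sigma>] p by simp
  show ?thesis
  proof (cases "p < n")
    case True
    have absp1: "\<bar>\<sigma> (Suc p)\<bar> \<le> int n" by (rule SP_abs_le[OF s])
    have t1: "tdes ?\<pi> (Suc p) = (if e = 1 then 1 else 0)"
      using e absp1 by (auto simp: tdes_def ins_def)
    have C: "(\<Sum>i\<in>{Suc p..<n}. tdes ?\<pi> (Suc i)) = (\<Sum>i\<in>{Suc p..<n}. tdes \<sigma> i)"
      by (rule sum.cong) (auto simp: tdes_def ins_def)
    have E1: "(\<Sum>i\<in>{p..<n}. tdes ?\<pi> (Suc i)) = tdes ?\<pi> (Suc p) + (\<Sum>i\<in>{Suc p..<n}. tdes ?\<pi> (Suc i))"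
      using True by (simp add: sum.atLeast_Suc_lessThan)
    have E2: "(\<Sum>i\<in>{p..<n}. tdes \<sigma> i) = tdes \<sigma> p + (\<Sum>i\<in>{Suc p..<n}. tdes \<sigma> i)"
      using True by (simp add: sum.atLeast_Suc_lessThan)
    have "(if e = -1 then 1 else 0) + tdes ?\<pi> (Suc p) = (1::nat)" using e t1 by auto
    then show ?thesis using True D1 D2 E1 E2 C tdes_le[of \<sigma> p] by simp
  next
    case False
    then have "p = n" using p by simp
    then show ?thesis using D1 D2 by simp
  qed
qed

lemma inner_sum:
  fixes f :: "nat \<Rightarrow> real"
  assumes s: "\<sigma> \<in> SP n"
  shows "(\<Sum>p\<in>{..n}. \<Sum>e\<in>{1,-1::int}. f (dsum (Suc n) (ins n \<sigma> p e))) =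
     (2 * real (dsum n \<sigma>) + 1) * f (dsum n \<sigma>) + (2 * real n - 2 * real (dsum n \<sigma>) + 1) * f (Suc (dsum n \<sigma>))"
proof -
  define d where "d = dsum n \<sigma>"
  have e2: "\<And>g::int\<Rightarrow>real. (\<Sum>e\<in>{1,-1::int}. g e) = g 1 + g (-1)" by simp
  have inner_lt: "(\<Sum>e\<in>{1,-1::int}. f (dsum (Suc n) (ins n \<sigma> p e))) =
      2 * f (Suc d) + real (tdes \<sigma> p) * (2 * f d - 2 * f (Suc d))" if "p < n" for p
  proof -
    have "\<And>e. e \<in> {1,-1} \<Longrightarrow> dsum (Suc n) (ins n \<sigma> p e) = d + 1 - tdes \<sigma> p"
      using des_ins[OF s] that d_def by simp
    then have "(\<Sum>e\<in>{1,-1::int}. f (dsum (Suc n) (ins n \<sigma> p e))) = 2 * f (d + 1 - tdes \<sigma> p)"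
      by (simp add: e2)
    moreover have "tdes \<sigma> p = 0 \<or> tdes \<sigma> p = 1" by (simp add: tdes_def)
    ultimately show ?thesis by auto
  qed
  have inner_n: "(\<Sum>e\<in>{1,-1::int}. f (dsum (Suc n) (ins n \<sigma> n e))) = f d + f (Suc d)"
    using des_ins[OF s, of n] d_def by (simp add: e2)
  have "{..n} = insert n {..<n}" by auto
  then have "(\<Sum>p\<in>{..n}. \<Sum>e\<in>{1,-1::int}. f (dsum (Suc n) (ins n \<sigma> p e))) =
      (f d + f (Suc d)) + (\<Sum>p\<in>{..<n}. \<Sum>e\<in>{1,-1::int}. f (dsum (Suc n) (ins n \<sigma> p e)))"
    using inner_n by simp
  also have "(\<Sum>p\<in>{..<n}. \<Sum>e\<in>{1,-1::int}. f (dsum (Suc n) (ins n \<sigma> p e))) =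
      (\<Sum>p\<in>{..<n}. 2 * f (Suc d) + real (tdes \<sigma> p) * (2 * f d - 2 * f (Suc d)))"
    by (rule sum.cong[OF refl], rule inner_lt) simp
  also have "\<dots> = real n * (2 * f (Suc d)) + (\<Sum>p\<in>{..<n}. real (tdes \<sigma> p)) * (2 * f d - 2 * f (Suc d))"
    by (simp add: sum.distrib sum_distrib_right)
  also have "(\<Sum>p\<in>{..<n}. real (tdes \<sigma> p)) = real d"
    unfolding d_def dsum_def atLeast0LessThan by simp
  finally show ?thesis unfolding d_def[symmetric] by (simp add: algebra_simps)
qed

lemma sum3: "(\<Sum>(a,b,c)\<in>A\<times>B\<times>C. G a b c) = (\<Sum>a\<in>A. \<Sum>b\<in>B. \<Sum>c\<in>C. G a b c)"
  by (simp only: sum.cartesian_product)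

lemma SP_rec:
  fixes f :: "nat \<Rightarrow> real"
  shows "(\<Sum>\<pi>\<in>SP (Suc n). f (desB (Suc n) \<pi>)) =
    (\<Sum>\<sigma>\<in>SP n. (2 * real (desB n \<sigma>) + 1) * f (desB n \<sigma>) + (2 * real n - 2 * real (desB n \<sigma>) + 1) * f (Suc (desB n \<sigma>)))"
proof -
  have "(\<Sum>\<pi>\<in>SP (Suc n). f (desB (Suc n) \<pi>)) =
      (\<Sum>x\<in>SP n \<times> {..n} \<times> {1,-1}. f (desB (Suc n) ((\<lambda>(\<sigma>, p, e). ins n \<sigma> p e) x)))"
    by (rule sum.reindex_bij_betw[OF ins_bij, symmetric])
  also have "\<dots> = (\<Sum>(\<sigma>,p,e)\<in>SP n \<times> {..n} \<times> {1,-1::int}. f (dsum (Suc n) (ins n \<sigma> p e)))"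
    by (rule sum.cong[OF refl]) (auto simp: desB_dsum split: prod.splits)
  also have "\<dots> = (\<Sum>\<sigma>\<in>SP n. \<Sum>p\<in>{..n}. \<Sum>e\<in>{1,-1::int}. f (dsum (Suc n) (ins n \<sigma> p e)))"
    by (rule sum3)
  also have "\<dots> = (\<Sum>\<sigma>\<in>SP n. (2 * real (desB n \<sigma>) + 1) * f (desB n \<sigma>) + (2 * real n - 2 * real (desB n \<sigma>) + 1) * f (Suc (desB n \<sigma>)))"
    unfolding desB_dsum by (rule sum.cong[OF refl], rule inner_sum)
  finally show ?thesis .
qed


lemma SP0: "SP 0 = {\<lambda>_. 0}"
proof
  show "SP 0 \<subseteq> {\<lambda>_. 0}"
  proof
    fix \<pi> assume a: "\<pi> \<in> SP 0"
    have "\<pi> i = 0" for i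
      using SP_zero[OF a] SP_big[OF a, of i] by (cases i) auto
    then show "\<pi> \<in> {\<lambda>_. 0}" by auto
  qed
  show "{\<lambda>_. 0} \<subseteq> SP 0" by (auto simp: signed_perms_def bij_betw_def)
qed

lemma desB0: "desB 0 \<pi> = 0" by (simp add: desB_def)

lemma desB_le: "desB n \<pi> \<le> n" using dsum_le by (simp add: desB_dsum)

definition cf :: "nat \<Rightarrow> nat \<Rightarrow> real" where
  "cf n j = (\<Sum>\<pi>\<in>SP n. if desB n \<pi> = j then 1 else 0)"

lemma cf0: "cf 0 j = (if j = 0 then 1 else 0)"
  by (simp add: cf_def SP0 desB0)

lemma cf_big: "n < j \<Longrightarrow> cf n j = 0"
  unfolding cf_def using desB_le by (intro sum.neutral) (metis leD)

lemma cf_rec: "cf (Suc n) j = (2 * real j + 1) * cf n j + (if j = 0 then 0 else (2 * real n - 2 * real j + 3) * cf n (j - 1))"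
proof -
  have "cf (Suc n) j = (\<Sum>\<sigma>\<in>SP n. (2 * real (desB n \<sigma>) + 1) * (if desB n \<sigma> = j then 1 else 0)
      + (2 * real n - 2 * real (desB n \<sigma>) + 1) * (if Suc (desB n \<sigma>) = j then 1 else 0))"
    unfolding cf_def by (rule SP_rec)
  also have "\<dots> = (\<Sum>\<sigma>\<in>SP n. (2 * real j + 1) * (if desB n \<sigma> = j then 1 else 0))
      + (\<Sum>\<sigma>\<in>SP n. (if j = 0 then 0 else (2 * real n - 2 * real j + 3) * (if desB n \<sigma> = j - 1 then 1 else 0)))"
    unfolding sum.distrib[symmetric] by (rule sum.cong[OF refl]) auto
  also have "\<dots> = (2 * real j + 1) * cf n j + (if j = 0 then 0 else (2 * real n - 2 * real j + 3) * cf n (j - 1))"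
    by (simp add: cf_def sum_distrib_left)
  finally show ?thesis .
qed

lemma eulerB_cf: "eulerB n y = (\<Sum>j\<le>n. cf n j * y ^ j)"
proof -
  have "eulerB n y = (\<Sum>\<pi>\<in>SP n. \<Sum>j\<le>n. (if desB n \<pi> = j then 1 else 0) * y ^ j)"
    unfolding eulerB_def
  proof (rule sum.cong[OF refl])
    fix \<pi> assume "\<pi> \<in> SP n"
    have "desB n \<pi> \<in> {..n}" using desB_le by simp
    then show "y ^ desB n \<pi> = (\<Sum>j\<le>n. (if desB n \<pi> = j then 1 else 0) * y ^ j)"
    proof -
      have "(\<Sum>j\<le>n. (if desB n \<pi> = j then 1 else 0) * y ^ j) = (\<Sum>j\<le>n. if j = desB n \<pi> then y ^ j else 0)"
        by (rule sum.cong) auto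
      also have "\<dots> = y ^ desB n \<pi>" using \<open>desB n \<pi> \<in> {..n}\<close> by (simp only: sum.delta finite_atMost) simp
      finally show ?thesis by simp
    qed
  qed
  also have "\<dots> = (\<Sum>j\<le>n. cf n j * y ^ j)"
    by (subst sum.swap) (simp add: cf_def sum_distrib_right)
  finally show ?thesis .
qed

lemma eulerB_1_rec: "eulerB (Suc n) 1 = (2 * real n + 2) * eulerB n 1"
proof -
  have "eulerB (Suc n) 1 = (\<Sum>\<pi>\<in>SP (Suc n). (\<lambda>_. 1::real) (desB (Suc n) \<pi>))"
    by (simp add: eulerB_def)
  also have "\<dots> = (\<Sum>\<sigma>\<in>SP n. (2 * real n + 2))"
    by (subst SP_rec) (simp add: algebra_simps)
  also have "\<dots> = (2 * real n + 2) * eulerB n 1"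
    by (simp add: eulerB_def)
  finally show ?thesis .
qed

lemma cf_top: "cf (Suc n) (Suc n) = cf n n"
proof -
  have "cf (Suc n) (Suc n) = (2 * real (Suc n) + 1) * cf n (Suc n) + (2 * real n - 2 * real (Suc n) + 3) * cf n n"
    using cf_rec[of n "Suc n"] by simp
  also have "\<dots> = cf n n" using cf_big[of n "Suc n"] by simp
  finally show ?thesis .
qed

lemma cf_bot: "cf (Suc n) 0 = cf n 0"
  using cf_rec[of n 0] by simp

lemma cf_sym: "j \<le> n \<Longrightarrow> cf n j = cf n (n - j)"
proof (induction n arbitrary: j)
  case 0 then show ?case by simp
next
  case (Suc n)
  have nn: "cf n n = cf n 0" using Suc.IH[of n] by simp
  show ?case
  proof (cases "j = 0")
    case True
    then show ?thesis using cf_top[of n] cf_bot[of n] nn by simp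
  next
    case False
    show ?thesis
    proof (cases "j = Suc n")
      case True
      then show ?thesis using cf_top[of n] cf_bot[of n] nn by simp
    next
      case False2: False
      have j1: "j - 1 \<le> n" "j \<le> n" using Suc.prems False False2 by auto
      have a: "cf n (n - j) = cf n j" using Suc.IH[OF j1(2)] by simp
      have b: "cf n (n - (j - 1)) = cf n (j - 1)" using Suc.IH[OF j1(1)] by simp
      define m where "m = Suc n - j"
      have m0: "m \<noteq> 0" using j1 by (simp add: m_def)
      have e1: "m - 1 = n - j" "m = n - (j - 1)" using False j1 by (auto simp: m_def)
      have rm: "real m = real n + 1 - real j" using j1 by (simp add: m_def of_nat_diff)
      have "cf (Suc n) m = (2 * real m + 1) * cf n m + (2 * real n - 2 * real m + 3) * cf n (m - 1)"
        using cf_rec[of n m] m0 by simp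
      also have "cf n m = cf n (j - 1)" using b e1 by simp
      also have "cf n (m - 1) = cf n j" using a e1 by simp
      also have "(2 * real m + 1) * cf n (j - 1) + (2 * real n - 2 * real m + 3) * cf n j
          = (2 * real j + 1) * cf n j + (2 * real n - 2 * real j + 3) * cf n (j - 1)"
        unfolding rm by (simp add: algebra_simps)
      also have "\<dots> = cf (Suc n) j" using cf_rec[of n j] False by simp
      finally show ?thesis by (simp add: m_def)
    qed
  qed
qed

lemma eulerB_pal:
  assumes q: "q \<noteq> 0"
  shows "q ^ n * eulerB n (inverse q) = eulerB n q"
proof -
  have pw: "q ^ n * inverse q ^ j = q ^ (n - j)" if "j \<le> n" for j
  proof -
    have "q ^ n = q ^ (n - j) * q ^ j" using that by (simp add: power_add[symmetric])
    then show ?thesis using q by (simp add: power_inverse field_simps)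
  qed
  have "q ^ n * eulerB n (inverse q) = (\<Sum>j\<le>n. cf n j * q ^ (n - j))"
    unfolding eulerB_cf sum_distrib_left
    by (rule sum.cong[OF refl]) (simp add: pw[symmetric] mult.left_commute)
  also have "\<dots> = (\<Sum>j=0..n. cf n j * q ^ (n - j))" by (simp add: atLeast0AtMost)
  also have "\<dots> = (\<Sum>j=0..n. cf n (n + 0 - j) * q ^ (n - (n + 0 - j)))"
    by (rule sum.atLeastAtMost_rev)
  also have "\<dots> = (\<Sum>j=0..n. cf n j * q ^ j)"
    by (rule sum.cong[OF refl]) (simp add: cf_sym[symmetric])
  finally show ?thesis by (simp add: eulerB_cf atLeast0AtMost)
qed

unbundle fps_syntax

definition Bf :: "nat \<Rightarrow> real fps" where "Bf n = Abs_fps (cf n)"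
definition Sf :: "nat \<Rightarrow> real fps" where "Sf n = Abs_fps (\<lambda>i. (2 * real i + 1) ^ n)"

lemma XXD_nth: "(fps_X * (fps_X * fps_deriv f)) $ Suc m = real m * (f $ m)" for f :: "real fps"
  by (cases m) simp_all

lemma Bf_rec: "Bf (Suc n) = Bf n + fps_const (2 * real n + 1) * (fps_X * Bf n)
   + fps_const 2 * (fps_X * fps_deriv (Bf n)) - fps_const 2 * (fps_X * (fps_X * fps_deriv (Bf n)))"
proof (rule fps_ext)
  fix j show "Bf (Suc n) $ j = (Bf n + fps_const (2 * real n + 1) * (fps_X * Bf n)
   + fps_const 2 * (fps_X * fps_deriv (Bf n)) - fps_const 2 * (fps_X * (fps_X * fps_deriv (Bf n)))) $ j"
  proof (cases j)
    case 0 then show ?thesis by (simp add: Bf_def cf_rec)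
  next
    case (Suc m)
    have "(Bf n + fps_const (2 * real n + 1) * (fps_X * Bf n)
      + fps_const 2 * (fps_X * fps_deriv (Bf n)) - fps_const 2 * (fps_X * (fps_X * fps_deriv (Bf n)))) $ Suc m
      = cf n (Suc m) + (2 * real n + 1) * cf n m + 2 * (real (Suc m) * cf n (Suc m)) - 2 * (real m * cf n m)"
      by (simp only: fps_add_nth fps_sub_nth fps_mult_left_const_nth XXD_nth) (simp add: Bf_def)
    also have "\<dots> = cf (Suc n) (Suc m)" by (simp add: cf_rec algebra_simps)
    finally show ?thesis using Suc by (simp add: Bf_def)
  qed
qed

lemma Sf_rec: "Sf (Suc n) = Sf n + fps_const 2 * (fps_X * fps_deriv (Sf n))"
proof (rule fps_ext)
  fix j show "Sf (Suc n) $ j = (Sf n + fps_const 2 * (fps_X * fps_deriv (Sf n))) $ j"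
    by (cases j) (simp_all add: Sf_def algebra_simps)
qed

lemma ring_id:
  fixes X Y S D k t c :: "'a::comm_ring_1"
  assumes "c = t * k - 1"
  shows "(1 - X) * Y * S + c * (X * ((1 - X) * Y * S)) + t * (X * (- (k * Y) * S + (1 - X) * Y * D))
     - t * (X * (X * (- (k * Y) * S + (1 - X) * Y * D))) = (1 - X) * ((1 - X) * Y) * (S + t * (X * D))"
  unfolding assms by (simp add: algebra_simps)

lemma deriv_pow: "fps_deriv ((1 - fps_X) ^ Suc n :: real fps) = - (fps_const (real (Suc n)) * (1 - fps_X) ^ n)"
proof -
  have "fps_deriv ((1 - fps_X) ^ Suc n :: real fps) = of_nat (Suc n) * fps_deriv (1 - fps_X) * (1 - fps_X) ^ n"
    by (simp only: fps_deriv_power' diff_Suc_1)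
  also have "fps_deriv (1 - fps_X :: real fps) = -1"
    by (simp only: fps_deriv_sub fps_deriv_1 fps_deriv_fps_X) simp
  finally show ?thesis unfolding fps_of_nat by (simp only: mult_minus1_right mult_minus_left)
qed

lemma Bf_closed: "Bf n = (1 - fps_X) ^ Suc n * Sf n"
proof (induction n)
  case 0
  show ?case
  proof (rule fps_ext)
    fix j show "Bf 0 $ j = ((1 - fps_X) ^ Suc 0 * Sf 0) $ j"
      by (simp add: Bf_def Sf_def cf0 algebra_simps)
  qed
next
  case (Suc n)
  let ?Y = "(1 - fps_X) ^ n :: real fps"
  have P: "(1 - fps_X) ^ Suc n = (1 - fps_X) * ?Y" by simp
  have DB: "fps_deriv (Bf n) = - (fps_const (real (Suc n)) * ?Y) * Sf n + (1 - fps_X) * ?Y * fps_deriv (Sf n)"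
    unfolding Suc.IH fps_deriv_mult deriv_pow P[symmetric] by simp
  have c: "fps_const (2 * real n + 1) = fps_const 2 * fps_const (real (Suc n)) - (1 :: real fps)"
    by (simp add: algebra_simps)
  have "Bf (Suc n) = (1 - fps_X) * ?Y * Sf n + fps_const (2 * real n + 1) * (fps_X * ((1 - fps_X) * ?Y * Sf n))
     + fps_const 2 * (fps_X * (- (fps_const (real (Suc n)) * ?Y) * Sf n + (1 - fps_X) * ?Y * fps_deriv (Sf n)))
     - fps_const 2 * (fps_X * (fps_X * (- (fps_const (real (Suc n)) * ?Y) * Sf n + (1 - fps_X) * ?Y * fps_deriv (Sf n))))"
    unfolding Bf_rec[of n] DB unfolding Suc.IH P ..
  also have "\<dots> = (1 - fps_X) * ((1 - fps_X) * ?Y) * (Sf n + fps_const 2 * (fps_X * fps_deriv (Sf n)))"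
    by (rule ring_id[OF c])
  also have "\<dots> = (1 - fps_X) ^ Suc (Suc n) * Sf (Suc n)" by (simp add: Sf_rec)
  finally show ?case .
qed

lemma gen_sum:
  "(\<Sum>l\<le>n. fps_const (of_nat (n choose l)) * (Bf (n - l) * (fps_const a * (1 - fps_X)) ^ l))
   = (1 - fps_X) ^ Suc n * Abs_fps (\<lambda>i. (a + (2 * real i + 1)) ^ n)"
proof -
  have "(\<Sum>l\<le>n. fps_const (of_nat (n choose l)) * (Bf (n - l) * (fps_const a * (1 - fps_X)) ^ l))
     = (\<Sum>l\<le>n. (1 - fps_X) ^ Suc n * (fps_const (of_nat (n choose l) * a ^ l) * Sf (n - l)))"
  proof (rule sum.cong[OF refl])
    fix l assume "l \<in> {..n}"
    then have e: "Suc n = Suc (n - l) + l" by simp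
    have "(1 - fps_X) ^ Suc n = (1 - fps_X) ^ Suc (n - l) * (1 - fps_X) ^ l"
      by (subst e) (rule power_add)
    then show "fps_const (of_nat (n choose l)) * (Bf (n - l) * (fps_const a * (1 - fps_X)) ^ l)
        = (1 - fps_X) ^ Suc n * (fps_const (of_nat (n choose l) * a ^ l) * Sf (n - l))"
    proof -
      have "fps_const (of_nat (n choose l)) * (Bf (n - l) * (fps_const a * (1 - fps_X)) ^ l)
          = fps_const (of_nat (n choose l)) * (((1 - fps_X) ^ Suc (n - l) * Sf (n - l)) * (fps_const (a ^ l) * (1 - fps_X) ^ l))"
        by (simp only: Bf_closed power_mult_distrib fps_const_power)
      also have "\<dots> = ((1 - fps_X) ^ Suc (n - l) * (1 - fps_X) ^ l) * (fps_const (of_nat (n choose l)) * fps_const (a ^ l) * Sf (n - l))"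
        by (simp only: ac_simps)
      also have "\<dots> = (1 - fps_X) ^ Suc n * (fps_const (of_nat (n choose l) * a ^ l) * Sf (n - l))"
        unfolding \<open>(1 - fps_X) ^ Suc n = (1 - fps_X) ^ Suc (n - l) * (1 - fps_X) ^ l\<close>[symmetric]
        by (simp only: fps_const_mult)
      finally show ?thesis .
    qed
  qed
  also have "\<dots> = (1 - fps_X) ^ Suc n * (\<Sum>l\<le>n. fps_const (of_nat (n choose l) * a ^ l) * Sf (n - l))"
    by (simp add: sum_distrib_left)
  also have "(\<Sum>l\<le>n. fps_const (of_nat (n choose l) * a ^ l) * Sf (n - l)) = Abs_fps (\<lambda>i. (a + (2 * real i + 1)) ^ n)"
  proof (rule fps_ext)
    fix i
    show "(\<Sum>l\<le>n. fps_const (of_nat (n choose l) * a ^ l) * Sf (n - l)) $ i = Abs_fps (\<lambda>i. (a + (2 * real i + 1)) ^ n) $ i"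
      by (simp add: fps_sum_nth Sf_def binomial_ring)
  qed
  finally show ?thesis .
qed

lemma fps_b:
  assumes "1 \<le> n"
  shows "(\<Sum>l\<le>n. fps_const (of_nat (n choose l)) * (Bf (n - l) * (fps_const (-1) * (1 - fps_X)) ^ l))
    = fps_X * (\<Sum>l\<le>n. fps_const (of_nat (n choose l)) * (Bf (n - l) * (fps_const 1 * (1 - fps_X)) ^ l))"
proof -
  have "Abs_fps (\<lambda>i. (- 1 + (2 * real i + 1)) ^ n) = fps_X * Abs_fps (\<lambda>i. (1 + (2 * real i + 1)) ^ n)"
  proof (rule fps_ext)
    fix i show "Abs_fps (\<lambda>i. (- 1 + (2 * real i + 1)) ^ n) $ i = (fps_X * Abs_fps (\<lambda>i. (1 + (2 * real i + 1)) ^ n)) $ i"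
    proof (cases i)
      case 0 then show ?thesis using assms by simp
    next
      case (Suc m)
      have "- 1 + (2 * real (Suc m) + 1) = 1 + (2 * real m + 1)" by simp
      then show ?thesis unfolding Suc by (simp only: fps_X_mult_nth fps_nth_Abs_fps) simp
    qed
  qed
  then show ?thesis unfolding gen_sum by (simp only: mult.left_commute)
qed

definition Bp :: "nat \<Rightarrow> real poly" where "Bp n = (\<Sum>j\<le>n. monom (cf n j) j)"

lemma poly_Bp: "poly (Bp n) y = eulerB n y"
  by (simp add: Bp_def poly_sum poly_monom eulerB_cf)

lemma fps_Bp: "fps_of_poly (Bp n) = Bf n"
proof (rule fps_ext)
  fix k
  have "coeff (Bp n) k = (\<Sum>j\<le>n. if j = k then cf n j else 0)"
    by (simp add: Bp_def coeff_sum)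
  also have "\<dots> = cf n k" using cf_big[of n k] by (simp add: sum.delta)
  finally show "fps_of_poly (Bp n) $ k = Bf n $ k" by (simp add: Bf_def)
qed

lemma fps_P1: "fps_of_poly [:1, -1:] = (1 - fps_X :: real fps)"
  by (rule fps_ext) (simp add: coeff_pCons split: nat.split)

lemma real_b:
  assumes "1 \<le> n"
  shows "(\<Sum>l\<le>n. of_nat (n choose l) * (eulerB (n - l) q * (- 1 * (1 - q)) ^ l))
    = q * (\<Sum>l\<le>n. of_nat (n choose l) * (eulerB (n - l) q * (1 * (1 - q)) ^ l))"
proof -
  define L where "L = (\<Sum>l\<le>n. smult (of_nat (n choose l)) (Bp (n - l) * (smult (-1) [:1, -1:]) ^ l))"
  define R where "R = [:0, 1:] * (\<Sum>l\<le>n. smult (of_nat (n choose l)) (Bp (n - l) * (smult 1 [:1, -1:]) ^ l))"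
  have "fps_of_poly L = fps_of_poly R"
    unfolding L_def R_def
    by (simp only: fps_of_poly_sum fps_of_poly_smult fps_of_poly_mult fps_of_poly_power fps_Bp fps_P1
        fps_of_poly_fps_X fps_b[OF assms])
  then have "L = R" by (simp only: fps_of_poly_eq_iff)
  then have "poly L q = poly R q" by simp
  then show ?thesis unfolding L_def R_def by (simp add: poly_sum poly_Bp)
qed


definition E :: "nat \<Rightarrow> nat \<Rightarrow> real \<Rightarrow> real" where
  "E n s q = (\<Sum>l\<le>s. of_nat (s choose l) * (eulerB (n - l) q * (q - 1) ^ l))"

lemma E0: "E n 0 q = eulerB n q" by (simp add: E_def)

lemma pascal_sum:
  fixes f :: "nat \<Rightarrow> real"
  shows "(\<Sum>l\<le>Suc s. of_nat (Suc s choose l) * f l) = (\<Sum>l\<le>s. of_nat (s choose l) * f (Suc l)) + (\<Sum>l\<le>s. of_nat (s choose l) * f l)"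
proof -
  have s1: "(\<Sum>l\<le>Suc s. of_nat (Suc s choose l) * f l) = f 0 + (\<Sum>l\<le>s. of_nat (Suc s choose Suc l) * f (Suc l))"
    by (simp only: sum.atMost_Suc_shift binomial_n_0 of_nat_1 mult_1_left)
  have s2: "(\<Sum>l\<le>s. of_nat (Suc s choose Suc l) * f (Suc l)) = (\<Sum>l\<le>s. of_nat (s choose l) * f (Suc l)) + (\<Sum>l\<le>s. of_nat (s choose Suc l) * f (Suc l))"
    by (simp only: binomial_Suc_Suc of_nat_add distrib_right sum.distrib)
  have s3: "f 0 + (\<Sum>l\<le>s. of_nat (s choose Suc l) * f (Suc l)) = (\<Sum>l\<le>Suc s. of_nat (s choose l) * f l)"
    by (simp only: sum.atMost_Suc_shift binomial_n_0 of_nat_1 mult_1_left)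
  have s4: "(\<Sum>l\<le>Suc s. of_nat (s choose l) * f l) = (\<Sum>l\<le>s. of_nat (s choose l) * f l)"
    by (simp only: sum.atMost_Suc) simp
  show ?thesis using s1 s2 s3 s4 by linarith
qed

lemma E_step: "E (Suc n) (Suc s) q - E (Suc n) s q = (q - 1) * E n s q"
proof -
  have "E (Suc n) (Suc s) q = (\<Sum>l\<le>s. of_nat (s choose l) * (eulerB (Suc n - Suc l) q * (q - 1) ^ Suc l)) + E (Suc n) s q"
    unfolding E_def by (rule pascal_sum)
  also have "(\<Sum>l\<le>s. of_nat (s choose l) * (eulerB (Suc n - Suc l) q * (q - 1) ^ Suc l)) = (q - 1) * E n s q"
    unfolding E_def sum_distrib_left by (rule sum.cong[OF refl]) (simp add: algebra_simps)
  finally show ?thesis by simp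
qed

lemma E_top:
  assumes n: "1 \<le> n" and q: "q \<noteq> 0"
  shows "q ^ Suc n * E n n (inverse q) = E n n q"
proof -
  have "q ^ Suc n * E n n (inverse q) = q * (\<Sum>l\<le>n. of_nat (n choose l) * (eulerB (n - l) q * (1 * (1 - q)) ^ l))"
    unfolding E_def sum_distrib_left
  proof (rule sum.cong[OF refl])
    fix l assume "l \<in> {..n}"
    then have nl: "n = (n - l) + l" by simp
    have pal: "eulerB (n - l) (inverse q) = eulerB (n - l) q / q ^ (n - l)"
      using eulerB_pal[OF q, of "n - l"] q by (simp add: field_simps)
    have i1: "inverse q - 1 = (1 - q) / q" using q by (simp add: field_simps)
    have qq: "q ^ Suc n = q * q ^ (n - l) * q ^ l"
      by (subst nl) (simp add: power_add)
    show "q ^ Suc n * (of_nat (n choose l) * (eulerB (n - l) (inverse q) * (inverse q - 1) ^ l))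
        = q * (of_nat (n choose l) * (eulerB (n - l) q * (1 * (1 - q)) ^ l))"
      unfolding pal i1 qq using q by (simp add: field_simps power_divide)
  qed
  also have "\<dots> = (\<Sum>l\<le>n. of_nat (n choose l) * (eulerB (n - l) q * (- 1 * (1 - q)) ^ l))"
    by (rule real_b[OF n, symmetric])
  also have "\<dots> = E n n q" unfolding E_def by simp
  finally show ?thesis .
qed

lemma swap_tri:
  fixes A b :: "nat \<Rightarrow> real"
  shows "(\<Sum>l=0..k. A l * (\<Sum>s=l..k. of_nat (s choose l) * b s)) = (\<Sum>s\<le>k. b s * (\<Sum>l\<le>s. of_nat (s choose l) * A l))"
proof -
  have e1: "(\<Sum>s=l..k. of_nat (s choose l) * b s) = (\<Sum>s\<le>k. of_nat (s choose l) * b s)" for l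
    by (rule sum.mono_neutral_left) (auto simp: binomial_eq_0)
  have e2: "(\<Sum>l\<le>k. A l * (of_nat (s choose l) * b s)) = b s * (\<Sum>l\<le>s. of_nat (s choose l) * A l)" if "s \<le> k" for s
  proof -
    have "(\<Sum>l\<le>k. A l * (of_nat (s choose l) * b s)) = (\<Sum>l\<le>s. A l * (of_nat (s choose l) * b s))"
      by (rule sum.mono_neutral_right) (use that in \<open>auto simp: binomial_eq_0\<close>)
    also have "\<dots> = b s * (\<Sum>l\<le>s. of_nat (s choose l) * A l)"
      by (simp add: sum_distrib_left mult_ac)
    finally show ?thesis .
  qed
  have "(\<Sum>l=0..k. A l * (\<Sum>s=l..k. of_nat (s choose l) * b s)) = (\<Sum>l\<le>k. \<Sum>s\<le>k. A l * (of_nat (s choose l) * b s))"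
    by (simp only: e1 atLeast0AtMost sum_distrib_left)
  also have "\<dots> = (\<Sum>s\<le>k. \<Sum>l\<le>k. A l * (of_nat (s choose l) * b s))" by (rule sum.swap)
  also have "\<dots> = (\<Sum>s\<le>k. b s * (\<Sum>l\<le>s. of_nat (s choose l) * A l))"
    by (rule sum.cong[OF refl]) (simp add: e2)
  finally show ?thesis .
qed

lemma Hk_alt: "Hk k x = (\<Sum>s\<le>k. x ^ (2*k+1-s) * E k s (x ^ (2*k+2)))
    + (\<Sum>s\<le>k. x ^ (2*(k+1)^2+s) * E k s (inverse (x ^ (2*k+2))))"
  unfolding Hk_def E_def
  using swap_tri[where A="\<lambda>l. eulerB (k - l) (x ^ (2*k+2)) * (x ^ (2*k+2) - 1) ^ l" and k=k and b="\<lambda>s. x ^ (2*k+1-s)"]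
        swap_tri[where A="\<lambda>l. eulerB (k - l) (inverse (x ^ (2*k+2))) * (inverse (x ^ (2*k+2)) - 1) ^ l" and k=k and b="\<lambda>s. x ^ (2*(k+1)^2+s)"]
  by (simp add: mult.assoc)

lemma Gk_alt: "Gk k x = (1 / x) * (\<Sum>s\<le>k. x ^ (2*k+3-s) * E k s (x ^ (2*k+4)))
    + (\<Sum>s\<le>k. x ^ (2*(k+1)*(k+2)+s) * E k s (inverse (x ^ (2*k+4))))"
  unfolding Gk_def E_def
  using swap_tri[where A="\<lambda>l. eulerB (k - l) (x ^ (2*k+4)) * (x ^ (2*k+4) - 1) ^ l" and k=k and b="\<lambda>s. x ^ (2*k+3-s)"]
        swap_tri[where A="\<lambda>l. eulerB (k - l) (inverse (x ^ (2*k+4))) * (inverse (x ^ (2*k+4)) - 1) ^ l" and k=k and b="\<lambda>s. x ^ (2*(k+1)*(k+2)+s)"]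
  by (simp add: mult.assoc)

lemma tele_down:
  fixes f :: "nat \<Rightarrow> real"
  shows "(1 - x) * (\<Sum>s\<le>Suc k. x ^ s * f s) = f 0 + (\<Sum>s\<le>k. x ^ Suc s * (f (Suc s) - f s)) - x ^ (k + 2) * f (Suc k)"
proof -
  have a: "(\<Sum>s\<le>Suc k. x ^ s * f s) = f 0 + (\<Sum>s\<le>k. x ^ Suc s * f (Suc s))"
    by (simp only: sum.atMost_Suc_shift) simp
  have b: "x * (\<Sum>s\<le>Suc k. x ^ s * f s) = (\<Sum>s\<le>k. x ^ Suc s * f s) + x ^ (k + 2) * f (Suc k)"
  proof -
    have "x * (\<Sum>s\<le>Suc k. x ^ s * f s) = (\<Sum>s\<le>Suc k. x ^ Suc s * f s)"
      unfolding sum_distrib_left by (simp add: mult.assoc)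
    also have "\<dots> = (\<Sum>s\<le>k. x ^ Suc s * f s) + x ^ (k + 2) * f (Suc k)"
      by (simp only: sum.atMost_Suc) simp
    finally show ?thesis .
  qed
  have "(1 - x) * (\<Sum>s\<le>Suc k. x ^ s * f s) = (\<Sum>s\<le>Suc k. x ^ s * f s) - x * (\<Sum>s\<le>Suc k. x ^ s * f s)"
    by (simp add: algebra_simps)
  also have "\<dots> = f 0 + (\<Sum>s\<le>k. x ^ Suc s * (f (Suc s) - f s)) - x ^ (k + 2) * f (Suc k)"
    unfolding b by (subst a) (simp add: sum_subtractf algebra_simps)
  finally show ?thesis .
qed

lemma tele_up:
  fixes f :: "nat \<Rightarrow> real"
  shows "(1 - x) * (\<Sum>s\<le>Suc k. x ^ (2*k+3-s) * f s)
     = x ^ (k + 2) * f (Suc k) - x ^ (2*k+4) * f 0 + (\<Sum>s\<le>k. x ^ (2*k+3-s) * (f s - f (Suc s)))"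
proof -
  have a: "(\<Sum>s\<le>Suc k. x ^ (2*k+3-s) * f s) = (\<Sum>s\<le>k. x ^ (2*k+3-s) * f s) + x ^ (k + 2) * f (Suc k)"
    by (simp add: sum.atMost_Suc numeral_eq_Suc)
  have b: "x * (\<Sum>s\<le>Suc k. x ^ (2*k+3-s) * f s) = x ^ (2*k+4) * f 0 + (\<Sum>s\<le>k. x ^ (2*k+3-s) * f (Suc s))"
  proof -
    have "x * (\<Sum>s\<le>Suc k. x ^ (2*k+3-s) * f s) = (\<Sum>s\<le>Suc k. x * (x ^ (2*k+3-s) * f s))"
      by (rule sum_distrib_left)
    also have "\<dots> = x * (x ^ (2*k+3) * f 0) + (\<Sum>s\<le>k. x * (x ^ (2*k+3- Suc s) * f (Suc s)))"
      by (simp only: sum.atMost_Suc_shift) simp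
    also have "(\<Sum>s\<le>k. x * (x ^ (2*k+3- Suc s) * f (Suc s))) = (\<Sum>s\<le>k. x ^ (2*k+3-s) * f (Suc s))"
    proof (rule sum.cong[OF refl])
      fix s assume "s \<in> {..k}"
      then have "2*k+3-s = Suc (2*k+3 - Suc s)" by simp
      then show "x * (x ^ (2*k+3- Suc s) * f (Suc s)) = x ^ (2*k+3-s) * f (Suc s)" by simp
    qed
    also have "x * (x ^ (2*k+3) * f 0) = x ^ (2*k+4) * f 0" by (simp add: numeral_eq_Suc)
    finally show ?thesis .
  qed
  have "(1 - x) * (\<Sum>s\<le>Suc k. x ^ (2*k+3-s) * f s) = (\<Sum>s\<le>Suc k. x ^ (2*k+3-s) * f s) - x * (\<Sum>s\<le>Suc k. x ^ (2*k+3-s) * f s)"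
    by (simp add: algebra_simps)
  also have "\<dots> = x ^ (k + 2) * f (Suc k) - x ^ (2*k+4) * f 0 + (\<Sum>s\<le>k. x ^ (2*k+3-s) * (f s - f (Suc s)))"
    unfolding b by (subst a) (simp add: sum_subtractf algebra_simps)
  finally show ?thesis .
qed

lemma geo: "x \<noteq> 1 \<Longrightarrow> (1 - x) * (\<Sum>j=1..n. x ^ j) = x - x ^ Suc n" for x :: real
  by (cases "n = 0") (simp_all add: sum_gp)

lemma E_one: "E n s 1 = eulerB n 1"
proof -
  have "E n s 1 = (\<Sum>l\<le>s. if l = 0 then eulerB n 1 else 0)"
    unfolding E_def by (rule sum.cong) auto
  then show ?thesis by simp
qed

lemma case_one: "Hk (Suc k) 1 = Gk k 1 * (\<Sum>j=1..2*k+4. 1 ^ j)"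
proof -
  have "Hk (Suc k) 1 = 2 * (real k + 2) * eulerB (Suc k) 1"
    unfolding Hk_alt by (simp add: E_one)
  moreover have "Gk k 1 = 2 * (real k + 1) * eulerB k 1"
    unfolding Gk_alt by (simp add: E_one)
  ultimately show ?thesis by (simp add: eulerB_1_rec algebra_simps)
qed

lemma main_ident:
  fixes x :: real
  assumes x0: "x \<noteq> 0"
  shows "(1 - x) * Hk (Suc k) x = x * (1 - x ^ (2*k+4)) * Gk k x"
proof -
  define q where "q = x ^ (2*k+4)"
  define Q where "Q = inverse q"
  have q0: "q \<noteq> 0" using x0 by (simp add: q_def)
  have qQ: "q * Q = 1" using q0 by (simp add: Q_def)
  define S1 where "S1 = (\<Sum>s\<le>k. x ^ (2*k+3-s) * E k s q)"
  define T where "T = (\<Sum>s\<le>k. x ^ s * E k s Q)"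
  have hH: "Hk (Suc k) x = (\<Sum>s\<le>Suc k. x ^ (2*k+3-s) * E (Suc k) s q) + q ^ (k+2) * (\<Sum>s\<le>Suc k. x ^ s * E (Suc k) s Q)"
  proof -
    have e: "x ^ (2*(Suc k+1)^2+s) = q ^ (k+2) * x ^ s" for s
    proof -
      have ex: "2*(Suc k+1)^2+s = (2*k+4)*(k+2) + s" by (simp add: power2_eq_square algebra_simps)
      show ?thesis unfolding ex q_def by (simp only: power_add power_mult)
    qed
    have ex1: "2 * Suc k + 2 = 2*k+4" "\<And>s. 2 * Suc k + 1 - s = 2*k+3-s" by simp_all
    have "Hk (Suc k) x = (\<Sum>s\<le>Suc k. x ^ (2*k+3-s) * E (Suc k) s q) + (\<Sum>s\<le>Suc k. x ^ (2*(Suc k+1)^2+s) * E (Suc k) s Q)"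
      unfolding Hk_alt ex1 q_def[symmetric] Q_def[symmetric] ..
    then show ?thesis unfolding e by (simp only: sum_distrib_left mult.assoc)
  qed
  have hG: "Gk k x = (1 / x) * S1 + q ^ (k+1) * T"
  proof -
    have e: "x ^ (2*(k+1)*(k+2)+s) = q ^ (k+1) * x ^ s" for s
    proof -
      have ex: "2*(k+1)*(k+2)+s = (2*k+4)*(k+1) + s" by (simp add: algebra_simps)
      show ?thesis unfolding ex q_def by (simp only: power_add power_mult)
    qed
    have "Gk k x = (1 / x) * S1 + (\<Sum>s\<le>k. x ^ (2*(k+1)*(k+2)+s) * E k s Q)"
      unfolding Gk_alt S1_def q_def[symmetric] Q_def[symmetric] ..
    then show ?thesis unfolding e T_def by (simp only: sum_distrib_left mult.assoc)
  qed
  have A: "(1 - x) * (\<Sum>s\<le>Suc k. x ^ (2*k+3-s) * E (Suc k) s q)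
      = x ^ (k+2) * E (Suc k) (Suc k) q - q * eulerB (Suc k) q - (q - 1) * S1"
  proof -
    have "(\<Sum>s\<le>k. x ^ (2*k+3-s) * (E (Suc k) s q - E (Suc k) (Suc s) q)) = - ((q - 1) * S1)"
      unfolding S1_def sum_distrib_left sum_negf[symmetric]
    proof (rule sum.cong[OF refl])
      fix s
      have estep: "E (Suc k) s q - E (Suc k) (Suc s) q = - ((q - 1) * E k s q)"
        using E_step[of k s q] by linarith
      show "x ^ (2*k+3-s) * (E (Suc k) s q - E (Suc k) (Suc s) q) = - ((q - 1) * (x ^ (2*k+3-s) * E k s q))"
        by (simp only: estep) (simp add: algebra_simps)
    qed
    then show ?thesis using tele_up[where x=x and k=k and f="\<lambda>s. E (Suc k) s q"] by (simp add: E0 q_def)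
  qed
  have B: "(1 - x) * (\<Sum>s\<le>Suc k. x ^ s * E (Suc k) s Q)
      = eulerB (Suc k) Q + (Q - 1) * x * T - x ^ (k+2) * E (Suc k) (Suc k) Q"
  proof -
    have "(\<Sum>s\<le>k. x ^ Suc s * (E (Suc k) (Suc s) Q - E (Suc k) s Q)) = (Q - 1) * x * T"
      unfolding T_def sum_distrib_left
      by (rule sum.cong[OF refl]) (simp add: E_step algebra_simps)
    then show ?thesis using tele_down[where x=x and k=k and f="\<lambda>s. E (Suc k) s Q"] by (simp add: E0)
  qed
  have f1: "q ^ (k+2) * eulerB (Suc k) Q = q * eulerB (Suc k) q"
  proof -
    have "q ^ (k+2) * eulerB (Suc k) Q = q * (q ^ Suc k * eulerB (Suc k) (inverse q))"
      by (simp add: Q_def)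
    then show ?thesis unfolding eulerB_pal[OF q0] .
  qed
  have f2: "q ^ (k+2) * (Q - 1) = q ^ (k+1) * (1 - q)"
  proof -
    have "q ^ (k+2) * (Q - 1) = q ^ (k+1) * (q * Q) - q ^ (k+1) * q" by (simp add: algebra_simps)
    then show ?thesis using qQ by (simp add: algebra_simps)
  qed
  have f3: "q ^ (k+2) * E (Suc k) (Suc k) Q = E (Suc k) (Suc k) q"
    using E_top[of "Suc k" q] q0 by (simp add: Q_def)
  have "(1 - x) * Hk (Suc k) x = (1 - x) * (\<Sum>s\<le>Suc k. x ^ (2*k+3-s) * E (Suc k) s q)
       + q ^ (k+2) * ((1 - x) * (\<Sum>s\<le>Suc k. x ^ s * E (Suc k) s Q))"
    unfolding hH by (simp add: algebra_simps)
  also have "\<dots> = x ^ (k+2) * E (Suc k) (Suc k) q - q * eulerB (Suc k) q - (q - 1) * S1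
      + (q ^ (k+2) * eulerB (Suc k) Q + (q ^ (k+2) * (Q - 1)) * x * T - x ^ (k+2) * (q ^ (k+2) * E (Suc k) (Suc k) Q))"
    unfolding A B by (simp add: algebra_simps)
  also have "\<dots> = (1 - q) * S1 + x * (q ^ (k+1) * (1 - q)) * T"
    unfolding f1 f2 f3 by (simp add: algebra_simps)
  also have "\<dots> = x * (1 - q) * Gk k x"
    unfolding hG using x0 by (simp add: algebra_simps)
  finally show ?thesis by (simp add: q_def)
qed

theorem lemma3p5:
  fixes k :: nat and x :: real
  assumes "x \<noteq> 0"
  shows "Hk (Suc k) x = Gk k x * (\<Sum>j=1..2*k+4. x ^ j)"
proof (cases "x = 1")
  case True then show ?thesis using case_one by simp
next
  case False
  have g: "(1 - x) * (\<Sum>j=1..2*k+4. x ^ j) = x * (1 - x ^ (2*k+4))"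
  proof -
    have "x - x ^ Suc (2*k+4) = x * (1 - x ^ (2*k+4))" by (simp only: power_Suc) (simp add: algebra_simps)
    then show ?thesis using geo[OF False, of "2*k+4"] by simp
  qed
  have "(1 - x) * Hk (Suc k) x = (1 - x) * (Gk k x * (\<Sum>j=1..2*k+4. x ^ j))"
    unfolding main_ident[OF assms] mult.left_commute[of "1 - x"] g by (simp add: algebra_simps)
  then show ?thesis using False by simp
qed


end
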